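(* Let $(\tilde X,\tilde Z)$ be $N\times N$ complex matrices with $\mathrm{rank}([\tilde X,\tilde Z]+I)=1$ and $\det(I+\tilde Z)\neq0$. Define $$X=I+\tilde Z^t,\qquad Z=\tilde X^t(I+\tilde Z^t).$$ Then $X$ is invertible and $\mathrm{rank}(XZX^{-1}-Z+I)=1$. Moreover, for the function $$\psi^b(n,z)=(1+z)^n\det\big\{I+\big(\tilde X-n(I+\tilde Z)^{-1}\big)^{-1}(zI-\tilde Z)^{-1}\big\},$$ one has $$\psi^b(z,e^x-1)=e^{xz}\det\big\{I-X(e^xI-X)^{-1}(zI-Z)^{-1}\big\}.$$
   Context: $M^t$ denotes the transpose of a matrix $M$, and $[A,B]=AB-BA$. *)

theory Defs
  imports "HOL-Analysis.Analysis"
begin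

definition commutator :: "complex^'n^'n \<Rightarrow> complex^'n^'n \<Rightarrow> complex^'n^'n" where
  "commutator A B = A ** B - B ** A"

text \<open>The determinant factor of psi^b(n,z) = (1+z)^n * psib_det Xt Zt n z, i.e.
  psib_det Xt Zt n z = det(I + (Xt - n (I+Zt)^{-1})^{-1} (z I - Zt)^{-1}).\<close>
definition psib_det :: "complex^'n^'n \<Rightarrow> complex^'n^'n \<Rightarrow> complex \<Rightarrow> complex \<Rightarrow> complex" where
  "psib_det Xt Zt n z =
     det (mat 1 + matrix_inv (Xt - mat n ** matrix_inv (mat 1 + Zt)) ** matrix_inv (mat z - Zt))"

end

theory Submission
  imports Defs
begin

lemma mm_diff_l: "(A::'a::comm_ring_1^'n^'m) ** (B - C) = A ** B - A ** C"
  by (vector matrix_matrix_mult_def sum_subtractf right_diff_distrib)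
lemma mm_diff_r: "((B::'a::comm_ring_1^'n^'m) - C) ** A = B ** A - C ** A"
  by (vector matrix_matrix_mult_def sum_subtractf left_diff_distrib)
lemma mm_add_r: "((B::'a::comm_ring_1^'n^'m) + C) ** A = B ** A + C ** A"
  by (vector matrix_matrix_mult_def sum.distrib distrib_right)
lemma mm_neg_l: "(- (A::'a::comm_ring_1^'n^'m)) ** B = - (A ** B)"
  by (vector matrix_matrix_mult_def sum_negf)
lemma mm_neg_r: "(A::'a::comm_ring_1^'n^'m) ** (- B) = - (A ** B)"
  by (vector matrix_matrix_mult_def sum_negf)
lemma mat_l: "mat z ** (A::'a::comm_ring_1^'n^'m) = (\<chi> i j. z * A$i$j)"
  unfolding matrix_matrix_mult_def mat_def
  by (auto simp: vec_eq_iff if_distrib if_distribR sum.delta'[OF finite] cong: if_cong)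
lemma mat_r: "(A::'a::comm_ring_1^'n^'m) ** mat z = (\<chi> i j. z * A$i$j)"
  unfolding matrix_matrix_mult_def mat_def
  by (auto simp: vec_eq_iff if_distrib if_distribR sum.delta'[OF finite] mult.commute cong: if_cong)
lemma mat_comm: "mat z ** (A::'a::comm_ring_1^'n^'n) = A ** mat z"
  by (simp add: mat_l mat_r)
lemma mat_diff: "(mat (a - b) :: 'a::comm_ring_1^'n^'n) = mat a - mat b"
  by (vector mat_def)
lemma transpose_diff: "transpose ((A::'a::comm_ring_1^'n^'m) - B) = transpose A - transpose B"
  by (vector transpose_def)
lemma transpose_add: "transpose ((A::'a::comm_ring_1^'n^'m) + B) = transpose A + transpose B"
  by (vector transpose_def)

lemma inv_props:
  fixes A :: "'a::field^'n^'n"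
  assumes "invertible A"
  shows "A ** matrix_inv A = mat 1" "matrix_inv A ** A = mat 1"
proof -
  have "\<exists>A'. A ** A' = mat 1 \<and> A' ** A = mat 1" using assms unfolding invertible_def by blast
  from someI_ex[OF this] show "A ** matrix_inv A = mat 1" "matrix_inv A ** A = mat 1"
    unfolding matrix_inv_def by auto
qed

lemma inv_unique:
  fixes A :: "'a::field^'n^'n"
  assumes "invertible A" "A ** B = mat 1"
  shows "matrix_inv A = B"
proof -
  have "matrix_inv A = matrix_inv A ** (A ** B)" using assms by simp
  also have "\<dots> = B" by (simp add: matrix_mul_assoc inv_props[OF assms(1)])
  finally show ?thesis .
qed

lemma inv_transpose:
  fixes A :: "'a::field^'n^'n"
  assumes "invertible A"
  shows "matrix_inv (transpose A) = transpose (matrix_inv A)"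
proof (rule inv_unique)
  show "invertible (transpose A)" using assms by (simp add: invertible_det_nz)
  show "transpose A ** transpose (matrix_inv A) = mat 1"
    by (metis inv_props(2)[OF assms] matrix_transpose_mul transpose_mat)
qed

lemma rank_transpose_le:
  fixes A :: "'a::field^'n^'m"
  shows "rank (transpose A) \<le> rank A"
proof -
  obtain B where B: "B \<subseteq> rows A" "vec.independent B" "rows A \<subseteq> vec.span B" "card B = vec.dim (rows A)"
    using vec.basis_exists by blast
  have fB: "finite B" using B(2) vec.finiteI_independent by blast
  have "\<forall>i. \<exists>u. row i A = (\<Sum>v\<in>B. u v *s v)"
  proof
    fix i
    have "row i A \<in> vec.span B" using B(3) unfolding rows_def by blast
    then show "\<exists>u. row i A = (\<Sum>v\<in>B. u v *s v)" unfolding vec.span_finite[OF fB] by blast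
  qed
  then obtain c where c: "\<And>i. row i A = (\<Sum>v\<in>B. c i v *s v)" by metis
  let ?W = "(\<lambda>v. \<chi> i. c i v) ` B"
  have "columns A \<subseteq> vec.span ?W"
  proof
    fix y assume "y \<in> columns A"
    then obtain j where j: "y = column j A" unfolding columns_def by blast
    have "y = (\<Sum>v\<in>B. (v$j) *s (\<chi> i. c i v))"
    proof -
      have "A$i$j = (\<Sum>v\<in>B. c i v * v$j)" for i
      proof -
        have "A$i$j = (row i A)$j" by (simp add: row_def)
        also have "\<dots> = (\<Sum>v\<in>B. c i v * v$j)" by (simp add: c sum_component)
        finally show ?thesis .
      qed
      then show ?thesis by (simp add: j column_def vec_eq_iff sum_component mult.commute)
    qed
    also have "\<dots> \<in> vec.span ?W"
      by (intro vec.span_sum vec.span_scale vec.span_base) auto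
    finally show "y \<in> vec.span ?W" .
  qed
  then have "vec.dim (columns A) \<le> card ?W" by (rule vec.dim_le_card) (use fB in auto)
  also have "\<dots> \<le> card B" using fB card_image_le by blast
  finally show ?thesis unfolding row_rank_def_gen B(4) by (simp add: rows_transpose)
qed

lemma rank_transpose_gen:
  fixes A :: "'a::field^'n^'m"
  shows "rank (transpose A) = rank A"
  using rank_transpose_le[of A] rank_transpose_le[of "transpose A"] by simp


theorem mainTheorem9:
  fixes Xt Zt :: "complex^'n^'n"
  assumes rk: "rank (commutator Xt Zt + mat 1) = 1"
    and det_ne: "det (mat 1 + Zt) \<noteq> 0"
  defines "X \<equiv> mat 1 + transpose Zt"
    and "Z \<equiv> transpose Xt ** (mat 1 + transpose Zt)"
  shows "invertible X
    \<and> rank (X ** Z ** matrix_inv X - Z + mat 1) = 1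
    \<and> (\<forall>x z :: complex.
          det (Xt - mat z ** matrix_inv (mat 1 + Zt)) \<noteq> 0
        \<longrightarrow> det (mat (exp x - 1) - Zt) \<noteq> 0
        \<longrightarrow> det (mat (exp x) - X) \<noteq> 0
        \<longrightarrow> det (mat z - Z) \<noteq> 0
        \<longrightarrow> exp (x * z) * psib_det Xt Zt z (exp x - 1)
            = exp (x * z) * det (mat 1 - X ** matrix_inv (mat (exp x) - X) ** matrix_inv (mat z - Z)))"
proof -
  define A where "A = mat 1 + Zt"
  have invA: "invertible A" using det_ne by (simp add: A_def invertible_det_nz)
  have XA: "X = transpose A" by (simp add: X_def A_def transpose_add)
  have tX: "transpose X = A" by (simp add: XA)
  have invX: "invertible X" using det_ne by (simp add: XA A_def invertible_det_nz)
  have ZX: "Z = transpose Xt ** X" by (simp add: Z_def X_def)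
  have "X ** Z ** matrix_inv X = X ** transpose Xt" 
    by (simp add: ZX matrix_mul_assoc[symmetric] inv_props[OF invX])
  then have "X ** Z ** matrix_inv X - Z + mat 1 = transpose (Xt ** A - A ** Xt + mat 1)"
    by (simp add: ZX XA transpose_add transpose_diff matrix_transpose_mul)
  also have "Xt ** A - A ** Xt = commutator Xt Zt"
    by (simp add: A_def commutator_def matrix_add_ldistrib mm_add_r)
  finally have rk2: "rank (X ** Z ** matrix_inv X - Z + mat 1) = 1"
    using rk by (simp add: rank_transpose_gen)
  have main: "psib_det Xt Zt z (exp x - 1)
            = det (mat 1 - X ** matrix_inv (mat (exp x) - X) ** matrix_inv (mat z - Z))"
    if h1: "det (Xt - mat z ** matrix_inv (mat 1 + Zt)) \<noteq> 0"
    and h2: "det (mat (exp x - 1) - Zt) \<noteq> 0"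
    and h4: "det (mat z - Z) \<noteq> 0" for x z
  proof -
    define w where "w = exp x"
    define P where "P = Xt - mat z ** matrix_inv A"
    define Q where "Q = mat w - A"
    define S where "S = mat z - A ** Xt"
    have Q2: "mat (exp x - 1) - Zt = Q" by (simp add: Q_def w_def A_def mat_diff)
    have tQ: "mat (exp x) - X = transpose Q" by (simp add: Q_def w_def XA transpose_diff)
    have tS: "mat z - Z = transpose S"
      by (simp add: S_def ZX XA transpose_diff matrix_transpose_mul)
    have invP: "invertible P" using h1 by (simp add: P_def A_def invertible_det_nz)
    have invQ: "invertible Q" using h2 Q2 by (simp add: invertible_det_nz)
    have invS: "invertible S" using h4 tS by (simp add: invertible_det_nz)
    have AP: "A ** P = - S"
    proof -
      have "A ** P = A ** Xt - A ** mat z ** matrix_inv A"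
        by (simp add: P_def mm_diff_l matrix_mul_assoc)
      also have "A ** mat z ** matrix_inv A = mat z"
      proof -
        have "A ** mat z ** matrix_inv A = mat z ** (A ** matrix_inv A)"
          by (simp add: mat_comm matrix_mul_assoc)
        then show ?thesis by (simp add: inv_props[OF invA])
      qed
      finally show ?thesis by (simp add: S_def)
    qed
    have Peq: "P = - (matrix_inv A ** S)"
    proof -
      have "P = matrix_inv A ** (A ** P)" by (simp add: matrix_mul_assoc inv_props[OF invA])
      then show ?thesis by (simp add: AP mm_neg_r)
    qed
    have iP: "matrix_inv P = - (matrix_inv S ** A)"
    proof (rule inv_unique[OF invP])
      have "P ** (- (matrix_inv S ** A)) = matrix_inv A ** (S ** matrix_inv S) ** A"
        by (simp add: Peq mm_neg_l mm_neg_r matrix_mul_assoc)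
      then show "P ** (- (matrix_inv S ** A)) = mat 1"
        by (simp add: inv_props[OF invS] inv_props[OF invA])
    qed
    have QA: "Q ** A = A ** Q" by (simp add: Q_def mm_diff_l mm_diff_r mat_l mat_r)
    have iQA: "matrix_inv Q ** A = A ** matrix_inv Q"
    proof -
      have "matrix_inv Q ** A = matrix_inv Q ** (A ** Q) ** matrix_inv Q"
        by (simp add: matrix_mul_assoc[symmetric] inv_props[OF invQ])
      also have "\<dots> = matrix_inv Q ** Q ** A ** matrix_inv Q"
        by (simp add: QA[symmetric] matrix_mul_assoc)
      finally show ?thesis by (simp add: inv_props[OF invQ])
    qed
    have L: "psib_det Xt Zt z (exp x - 1) = det (mat 1 - matrix_inv S ** matrix_inv Q ** A)"
    proof -
      have "psib_det Xt Zt z (exp x - 1) = det (mat 1 + matrix_inv P ** matrix_inv Q)"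
        by (simp add: psib_det_def Q2 P_def A_def)
      also have "mat 1 + matrix_inv P ** matrix_inv Q = mat 1 - matrix_inv S ** matrix_inv Q ** A"
        by (simp add: iP mm_neg_l matrix_mul_assoc[symmetric] iQA)
      finally show ?thesis .
    qed
    have "transpose (mat 1 - X ** matrix_inv (mat (exp x) - X) ** matrix_inv (mat z - Z))
        = mat 1 - matrix_inv S ** matrix_inv Q ** A"
      by (simp add: tQ tS inv_transpose invQ invS transpose_diff matrix_transpose_mul tX
          matrix_mul_assoc)
    then have "det (mat 1 - X ** matrix_inv (mat (exp x) - X) ** matrix_inv (mat z - Z))
        = det (mat 1 - matrix_inv S ** matrix_inv Q ** A)"
      by (metis det_transpose)
    then show ?thesis using L by simp
  qed
  show ?thesis using invX rk2 main by auto
qed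

end
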